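(* Let $G$ be a topological group such that $G^{\omega}$ is selectively pseudocompact. Then $G^{\kappa}$ is selectively pseudocompact for every cardinal $\kappa \geq \omega$.
   Context: All topological groups are Hausdorff. A space $X$ is selectively pseudocompact if for every sequence $\{U_n:n\in\omega\}$ of nonempty open subsets of $X$ there are points $x_n\in U_n$ ($n\in\omega$) such that the sequence $\{x_n:n\in\omega\}$ has an accumulation point in $X$ (equivalently, there are $x\in X$ and a free ultrafilter $p$ on $\omega$ with $x=p\text{-}\lim_n x_n$, i.e. $\{n: x_n\in U\}\in p$ for every neighbourhood $U$ of $x$). Powers carry the product topology. *)

theory Defs
  imports "HOL-Analysis.Analysis"
begin

definition selectively_pseudocompact :: "'a topology \<Rightarrow> bool" where
  "selectively_pseudocompact X \<longleftrightarrow>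
     (\<forall>U :: nat \<Rightarrow> 'a set. (\<forall>n. openin X (U n) \<and> U n \<noteq> {}) \<longrightarrow>
        (\<exists>x :: nat \<Rightarrow> 'a. (\<forall>n. x n \<in> U n) \<and>
           (\<exists>y \<in> topspace X. \<forall>V. openin X V \<and> y \<in> V \<longrightarrow> infinite {n. x n \<in> V})))"

end

theory Submission
  imports Defs
begin

lemma nbhd_finite:
  assumes "openin (product_topology (\<lambda>_. (euclidean :: 'a::topological_space topology)) (UNIV :: 'k set)) U"
    and "u \<in> U"
  shows "\<exists>F. finite F \<and> (\<forall>v. (\<forall>i\<in>F. v i = u i) \<longrightarrow> v \<in> U)"
proof -
  obtain W where W: "finite {i. W i \<noteq> (UNIV::'a set)}" "u \<in> PiE UNIV W" "PiE UNIV W \<subseteq> U"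
    using assms unfolding openin_product_topology_alt by force
  show ?thesis
  proof (intro exI conjI allI impI)
    show "finite {i. W i \<noteq> (UNIV::'a set)}" by fact
    fix v :: "'k \<Rightarrow> 'a" assume h: "\<forall>i\<in>{i. W i \<noteq> UNIV}. v i = u i"
    have "v i \<in> W i" for i
      using W(2) h by (cases "W i = UNIV") (auto simp: PiE_iff)
    hence "v \<in> PiE UNIV W" by (auto simp: PiE_iff)
    thus "v \<in> U" using W(3) by blast
  qed
qed

theorem mainTheorem1:
  fixes G :: "'a :: {topological_group_add, t2_space} itself"
    and K :: "'k itself"
  assumes "selectively_pseudocompact
             (product_topology (\<lambda>_. (euclidean :: 'a topology)) (UNIV :: nat set))"
    and "infinite (UNIV :: 'k set)"
  shows "selectively_pseudocompact
           (product_topology (\<lambda>_. (euclidean :: 'a topology)) (UNIV :: 'k set))"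
  unfolding selectively_pseudocompact_def
proof (intro allI impI)
  let ?X = "product_topology (\<lambda>_. (euclidean :: 'a topology)) (UNIV :: nat set)"
  let ?Y = "product_topology (\<lambda>_. (euclidean :: 'a topology)) (UNIV :: 'k set)"
  fix U :: "nat \<Rightarrow> ('k \<Rightarrow> 'a) set"
  assume U: "\<forall>n. openin ?Y (U n) \<and> U n \<noteq> {}"
  have "\<forall>n. \<exists>u F. u \<in> U n \<and> finite F \<and> (\<forall>v. (\<forall>i\<in>F. v i = u i) \<longrightarrow> v \<in> U n)"
  proof
    fix n
    obtain u where "u \<in> U n" using U by blast
    thus "\<exists>u F. u \<in> U n \<and> finite F \<and> (\<forall>v. (\<forall>i\<in>F. v i = u i) \<longrightarrow> v \<in> U n)"
      using nbhd_finite[of "U n" u] U by blast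
  qed
  then obtain u where "\<forall>n. \<exists>F. u n \<in> U n \<and> finite F \<and> (\<forall>v. (\<forall>i\<in>F. v i = u n i) \<longrightarrow> v \<in> U n)"
    using choice[of "\<lambda>n u. \<exists>F. u \<in> U n \<and> finite F \<and> (\<forall>v. (\<forall>i\<in>F. v i = u i) \<longrightarrow> v \<in> U n)"] by blast
  then obtain F where F: "\<forall>n. u n \<in> U n \<and> finite (F n) \<and> (\<forall>v. (\<forall>i\<in>F n. v i = u n i) \<longrightarrow> v \<in> U n)"
    using choice[of "\<lambda>n F. u n \<in> U n \<and> finite F \<and> (\<forall>v. (\<forall>i\<in>F. v i = u n i) \<longrightarrow> v \<in> U n)"] by blast
  have uF: "\<And>n. u n \<in> U n" "\<And>n. finite (F n)"
    "\<And>n v. (\<forall>i\<in>F n. v i = u n i) \<Longrightarrow> v \<in> U n"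
    using F by blast+
  define C where "C = (\<Union>n. F n)"
  have cC: "countable C" unfolding C_def
    by (rule countable_UN) (auto intro: countable_finite uF(2))
  define e where "e = from_nat_into C"
  have re: "C \<subseteq> range e" unfolding e_def by (rule subset_range_from_nat_into[OF cC])
  define \<phi> :: "(nat \<Rightarrow> 'a) \<Rightarrow> ('k \<Rightarrow> 'a)" where "\<phi> z = (\<lambda>i. z (inv e i))" for z
  have cont: "continuous_map ?X ?Y \<phi>"
    unfolding \<phi>_def continuous_map_componentwise_UNIV
  proof
    fix i
    show "continuous_map ?X euclidean (\<lambda>x. x (inv e i))"
      using continuous_map_product_projection[of "inv e i" UNIV "\<lambda>_. (euclidean :: 'a topology)"] by simp
  qed
  define P where "P n = {z \<in> topspace ?X. \<phi> z \<in> U n}" for n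
  have P: "\<forall>n. openin ?X (P n) \<and> P n \<noteq> {}"
  proof
    fix n
    have "openin ?X (P n)" unfolding P_def using cont U openin_continuous_map_preimage by blast
    moreover have "\<phi> (\<lambda>m. u n (e m)) \<in> U n"
    proof (rule uF(3), intro ballI)
      fix i assume "i \<in> F n"
      hence "i \<in> range e" using re unfolding C_def by blast
      thus "\<phi> (\<lambda>m. u n (e m)) i = u n i" unfolding \<phi>_def by (simp add: f_inv_into_f)
    qed
    hence "(\<lambda>m. u n (e m)) \<in> P n" unfolding P_def by simp
    ultimately show "openin ?X (P n) \<and> P n \<noteq> {}" by blast
  qed
  then obtain x y where xy: "\<forall>n. x n \<in> P n" "y \<in> topspace ?X"
    "\<forall>V. openin ?X V \<and> y \<in> V \<longrightarrow> infinite {n. x n \<in> V}"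
    using assms(1) unfolding selectively_pseudocompact_def by blast
  show "\<exists>x. (\<forall>n. x n \<in> U n) \<and> (\<exists>y\<in>topspace ?Y. \<forall>V. openin ?Y V \<and> y \<in> V \<longrightarrow> infinite {n. x n \<in> V})"
  proof (rule exI[of _ "\<lambda>n. \<phi> (x n)"], intro conjI bexI[of _ "\<phi> y"] allI impI)
    show "\<phi> (x n) \<in> U n" for n using xy(1) unfolding P_def by blast
    show "\<phi> y \<in> topspace ?Y" by simp
    fix V assume V: "openin ?Y V \<and> \<phi> y \<in> V"
    have "openin ?X {z \<in> topspace ?X. \<phi> z \<in> V}"
      using cont V openin_continuous_map_preimage by blast
    moreover have "y \<in> {z \<in> topspace ?X. \<phi> z \<in> V}" using V xy(2) by simp
    ultimately have "infinite {n. x n \<in> {z \<in> topspace ?X. \<phi> z \<in> V}}" using xy(3) by blast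
    thus "infinite {n. \<phi> (x n) \<in> V}" by simp
  qed
qed

end
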